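(* If $T\in\mathscr{E}(X)$ and $\xi$ is a coarse filter on $X$, then $\inf_{F\in\xi}\|\mathbf{1}_FT\|=\inf_{F\in\xi}\|T\mathbf{1}_F\|$, both infima being taken over measurable $F\in\xi$.
   Context: $(X,d)$ is a non-compact proper metric space, $B_x(r)=\{y:d(x,y)\le r\}$, and $\mu$ is a Radon measure with support $X$ such that $\mu(B_x(r))>0$ and $\sup_x\mu(B_x(r))<\infty$ for all $r>0$. On $L^2(X,\mu)$, $\mathbf{1}_A$ is multiplication by the characteristic function of measurable $A$. A kernel $k$ on $X\times X$ is controlled if $k(x,y)=0$ whenever $d(x,y)>r$ for some $r$; $\mathscr{E}(X)$ is the norm closure of the operators $(Op(k)f)(x)=\int k(x,y)f(y)d\mu(y)$, $k$ bounded, uniformly continuous and controlled. A filter is a nonempty family of subsets, not containing $\emptyset$, stable under finite intersections and supersets. With $F^{(r)}=\{x:\inf_{y\notin F}d(x,y)>r\}$, a filter $\xi$ is coarse if $F\in\xi\Rightarrow F^{(r)}\in\xi$ for all $r>0$. *)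

theory Defs
  imports "HOL-Analysis.Analysis"
begin

definition radon_measure :: "'a::metric_space measure \<Rightarrow> bool" where
  "radon_measure M \<longleftrightarrow>
     sets M = sets borel \<and>
     (\<forall>K. compact K \<longrightarrow> emeasure M K < \<infinity>) \<and>
     (\<forall>A\<in>sets M. emeasure M A = (INF U \<in> {U. open U \<and> A \<subseteq> U}. emeasure M U)) \<and>
     (\<forall>U. open U \<longrightarrow> emeasure M U = (SUP K \<in> {K. compact K \<and> K \<subseteq> U}. emeasure M K))"

definition full_support :: "'a::metric_space measure \<Rightarrow> bool" where
  "full_support M \<longleftrightarrow> (\<forall>U x. open U \<and> x \<in> U \<longrightarrow> emeasure M U > 0)"

definition L2 :: "'a measure \<Rightarrow> ('a \<Rightarrow> complex) set" where
  "L2 M = {f. f \<in> borel_measurable M \<and> integrable M (\<lambda>x. (cmod (f x))\<^sup>2)}"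

definition l2norm :: "'a measure \<Rightarrow> ('a \<Rightarrow> complex) \<Rightarrow> real" where
  "l2norm M f = sqrt (\<integral>x. (cmod (f x))\<^sup>2 \<partial>M)"

definition op_bound :: "'a measure \<Rightarrow> (('a \<Rightarrow> complex) \<Rightarrow> ('a \<Rightarrow> complex)) \<Rightarrow> real \<Rightarrow> bool" where
  "op_bound M S c \<longleftrightarrow> (\<forall>f\<in>L2 M. S f \<in> L2 M \<and> l2norm M (S f) \<le> c * l2norm M f)"

definition opnorm :: "'a measure \<Rightarrow> (('a \<Rightarrow> complex) \<Rightarrow> ('a \<Rightarrow> complex)) \<Rightarrow> real" where
  "opnorm M S = (SUP f \<in> {f \<in> L2 M. l2norm M f \<le> 1}. l2norm M (S f))"

definition mult_ind :: "'a set \<Rightarrow> ('a \<Rightarrow> complex) \<Rightarrow> ('a \<Rightarrow> complex)" where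
  "mult_ind A f = (\<lambda>x. indicator A x * f x)"

definition controlled_kernel :: "('a::metric_space \<Rightarrow> 'a \<Rightarrow> complex) \<Rightarrow> bool" where
  "controlled_kernel k \<longleftrightarrow> (\<exists>r. \<forall>x y. dist x y > r \<longrightarrow> k x y = 0)"

definition good_kernel :: "('a::metric_space \<Rightarrow> 'a \<Rightarrow> complex) \<Rightarrow> bool" where
  "good_kernel k \<longleftrightarrow> (\<exists>B. \<forall>x y. cmod (k x y) \<le> B) \<and>
     uniformly_continuous_on UNIV (\<lambda>(x, y). k x y) \<and> controlled_kernel k"

definition Op :: "'a measure \<Rightarrow> ('a \<Rightarrow> 'a \<Rightarrow> complex) \<Rightarrow> ('a \<Rightarrow> complex) \<Rightarrow> ('a \<Rightarrow> complex)" where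
  "Op M k f = (\<lambda>x. \<integral>y. k x y * f y \<partial>M)"

definition E_alg :: "'a::metric_space measure \<Rightarrow> (('a \<Rightarrow> complex) \<Rightarrow> ('a \<Rightarrow> complex)) set" where
  "E_alg M = {T. \<forall>\<epsilon>>0. \<exists>k. good_kernel k \<and>
                 op_bound M (\<lambda>f x. T f x - Op M k f x) \<epsilon>}"

definition set_filter :: "'a set set \<Rightarrow> bool" where
  "set_filter \<xi> \<longleftrightarrow> \<xi> \<noteq> {} \<and> {} \<notin> \<xi> \<and> (\<forall>A\<in>\<xi>. \<forall>B\<in>\<xi>. A \<inter> B \<in> \<xi>) \<and>
                     (\<forall>A\<in>\<xi>. \<forall>B. A \<subseteq> B \<longrightarrow> B \<in> \<xi>)"

text \<open>F^(r) = {x. inf_{y not in F} d(x,y) > r}, the infimum taken in the extended reals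
  (so the infimum over the empty set is +infinity).\<close>
definition inner_nbhd :: "'a::metric_space set \<Rightarrow> real \<Rightarrow> 'a set" where
  "inner_nbhd F r = {x. (INF y \<in> - F. ereal (dist x y)) > ereal r}"

definition coarse_filter :: "'a::metric_space set set \<Rightarrow> bool" where
  "coarse_filter \<xi> \<longleftrightarrow> set_filter \<xi> \<and> (\<forall>F\<in>\<xi>. \<forall>r>0. inner_nbhd F r \<in> \<xi>)"

end

theory Submission
  imports Defs
begin

lemma ex_countable_dense:
  assumes proper: "\<forall>(x::'a::metric_space) r. compact (cball x r)"
  shows "\<exists>D::'a set. countable D \<and> (\<forall>x e. e > 0 \<longrightarrow> (\<exists>d\<in>D. dist x d < e))"
proof -
  define x0 :: 'a where "x0 = undefined"
  define C where "C = (\<lambda>(n::nat) (m::nat). SOME K. finite K \<and> cball x0 (real n) \<subseteq> \<Union>((\<lambda>c. ball c (1 / real (Suc m))) ` K))"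
  have C: "finite (C n m) \<and> cball x0 (real n) \<subseteq> \<Union>((\<lambda>c. ball c (1 / real (Suc m))) ` C n m)" for n m
  proof -
    have cp: "compact (cball x0 (real n))" using proper by blast
    have cov: "cball x0 (real n) \<subseteq> (\<Union>c\<in>cball x0 (real n). ball c (1 / real (Suc m)))"
      by (auto intro!: bexI)
    obtain K where "K \<subseteq> cball x0 (real n)" "finite K" "cball x0 (real n) \<subseteq> \<Union>((\<lambda>c. ball c (1 / real (Suc m))) ` K)"
      using compactE_image[OF cp _ cov] by blast
    then show ?thesis unfolding C_def by (metis (mono_tags, lifting) someI)
  qed
  define D where "D = (\<Union>n m. C n m)"
  have "countable D" unfolding D_def using C by (simp add: countable_finite)
  moreover have "\<exists>d\<in>D. dist x d < e" if "e > 0" for x e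
  proof -
    obtain m where m: "inverse (real (Suc m)) < e" using reals_Archimedean \<open>e>0\<close> by blast
    obtain n::nat where n: "dist x0 x \<le> real n" using real_arch_simple by blast
    then have "x \<in> cball x0 (real n)" by simp
    then obtain c where "c \<in> C n m" "x \<in> ball c (1 / real (Suc m))" using C[of n m] by blast
    moreover have "c \<in> D" using \<open>c \<in> C n m\<close> unfolding D_def by blast
    moreover have "dist x c < e" using \<open>x \<in> ball c _\<close> m by (simp add: dist_commute inverse_eq_divide)
    ultimately show ?thesis by blast
  qed
  ultimately show ?thesis by blast
qed

lemma open_in_pair_sets:
  fixes M :: "'a::metric_space measure" and D :: "'a set"
  assumes sM: "sets M = sets borel" and D: "countable D" "\<forall>x e. e > 0 \<longrightarrow> (\<exists>d\<in>D. dist x d < e)"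
    and U: "open (U :: ('a \<times> 'a) set)"
  shows "U \<in> sets (M \<Otimes>\<^sub>M M)"
proof -
  define R where "R = {(d::'a,d',q). d\<in>D \<and> d'\<in>D \<and> q \<in> \<rat> \<and> q > 0 \<and> ball d q \<times> ball d' q \<subseteq> U}"
  have cR: "countable R"
  proof -
    have "R \<subseteq> D \<times> D \<times> \<rat>" unfolding R_def by auto
    moreover have "countable (D \<times> D \<times> \<rat>)" using D(1) countable_rat by (auto intro!: countable_SIGMA)
    ultimately show ?thesis using countable_subset by blast
  qed
  have eq: "U = \<Union>((\<lambda>(d,d',q). ball d q \<times> ball d' q) ` R)"
  proof
    show "\<Union>((\<lambda>(d,d',q). ball d q \<times> ball d' q) ` R) \<subseteq> U" unfolding R_def by blast
    show "U \<subseteq> \<Union>((\<lambda>(d,d',q). ball d q \<times> ball d' q) ` R)"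
    proof
      fix p assume "p \<in> U"
      obtain x y where p: "p = (x,y)" by fastforce
      from open_prod_elim[OF U \<open>p\<in>U\<close>] obtain A B where AB: "open A" "open B" "p \<in> A \<times> B" "A \<times> B \<subseteq> U" by blast
      obtain e1 where e1: "e1 > 0" "ball x e1 \<subseteq> A" using AB p by (meson SigmaE2 openE)
      obtain e2 where e2: "e2 > 0" "ball y e2 \<subseteq> B" using AB p by (meson SigmaE2 openE)
      define e where "e = min e1 e2"
      have "e > 0" using e1 e2 e_def by simp
      obtain q where q: "q \<in> \<rat>" "0 < q" "q < e/2" using Rats_dense_in_real[of 0 "e/2"] \<open>e>0\<close> by auto
      obtain d where d: "d \<in> D" "dist x d < q" using D q by blast
      obtain d' where d': "d' \<in> D" "dist y d' < q" using D q by blast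
      have "ball d q \<subseteq> A"
      proof
        fix z assume "z \<in> ball d q"
        then have "dist x z < e1" using d q e_def dist_triangle[of x z d]
          by (simp add: dist_commute)
        then show "z \<in> A" using e1 by auto
      qed
      moreover have "ball d' q \<subseteq> B"
      proof
        fix z assume "z \<in> ball d' q"
        then have "dist y z < e2" using d' q e_def dist_triangle[of y z d']
          by (simp add: dist_commute)
        then show "z \<in> B" using e2 by auto
      qed
      ultimately have "(d,d',q) \<in> R" unfolding R_def using d d' q AB by auto
      moreover have "p \<in> ball d q \<times> ball d' q" using p d d' by (simp add: dist_commute)
      ultimately show "p \<in> \<Union>((\<lambda>(d,d',q). ball d q \<times> ball d' q) ` R)" by force
    qed
  qed
  have "(\<lambda>(d,d',q). ball d q \<times> ball d' q) ` R \<subseteq> sets (M \<Otimes>\<^sub>M M)"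
  proof -
    have bm: "ball a b \<in> sets M" for a b using sM by simp
    show ?thesis by (auto intro!: pair_measureI bm)
  qed
  then have "\<Union>((\<lambda>(d,d',q). ball d q \<times> ball d' q) ` R) \<in> sets (M \<Otimes>\<^sub>M M)"
    using cR by (intro sets.countable_Union) simp_all
  then show ?thesis using eq by simp
qed

lemma cont_pair_measurable:
  fixes M :: "'a::metric_space measure" and D :: "'a set" and h :: "'a \<times> 'a \<Rightarrow> 'b::topological_space"
  assumes sM: "sets M = sets borel" and D: "countable D" "\<forall>x e. e > 0 \<longrightarrow> (\<exists>d\<in>D. dist x d < e)"
    and h: "continuous_on UNIV h"
  shows "h \<in> borel_measurable (M \<Otimes>\<^sub>M M)"
proof (rule borel_measurableI)
  fix S :: "'b set" assume "open S"
  then have "open (h -` S)" using h open_vimage by blast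
  then have "h -` S \<in> sets (M \<Otimes>\<^sub>M M)" using open_in_pair_sets[OF sM D] by blast
  moreover have "space (M \<Otimes>\<^sub>M M) = UNIV"
    using sets_eq_imp_space_eq[OF sM] by (simp add: space_pair_measure)
  ultimately show "h -` S \<inter> space (M \<Otimes>\<^sub>M M) \<in> sets (M \<Otimes>\<^sub>M M)" by simp
qed

lemma sigma_finite_proper:
  fixes M :: "'a::metric_space measure"
  assumes sM: "sets M = sets borel" and proper: "\<forall>(x::'a) r. compact (cball x r)"
    and fin: "\<forall>K. compact K \<longrightarrow> emeasure M K < \<infinity>"
  shows "sigma_finite_measure M"
proof
  define x0 :: 'a where "x0 = undefined"
  define A where "A = range (\<lambda>n::nat. cball x0 (real n))"
  have "countable A" unfolding A_def by simp
  moreover have "A \<subseteq> sets M"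
  proof -
    have "cball x0 (real n) \<in> sets M" for n using sM by (simp add: borel_closed)
    then show ?thesis unfolding A_def by blast
  qed
  moreover have "\<Union>A = space M"
  proof -
    have "\<Union>A = UNIV"
    proof (intro set_eqI iffI)
      fix x :: 'a
      obtain n::nat where "dist x0 x \<le> real n" using real_arch_simple by blast
      then show "x \<in> \<Union>A" unfolding A_def by auto
    qed auto
    then show ?thesis using sets_eq_imp_space_eq[OF sM] by simp
  qed
  moreover have "\<forall>a\<in>A. emeasure M a \<noteq> \<infinity>"
  proof
    fix a assume "a \<in> A"
    then obtain n where an: "a = cball x0 (real n)" unfolding A_def by blast
    have "emeasure M a < \<infinity>" using fin proper an by blast
    then show "emeasure M a \<noteq> \<infinity>" by simp
  qed
  ultimately show "\<exists>A. countable A \<and> A \<subseteq> sets M \<and> \<Union> A = space M \<and> (\<forall>a\<in>A. emeasure M a \<noteq> \<infinity>)"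
    by blast
qed

lemma l2norm_nonneg: "0 \<le> l2norm M f"
  unfolding l2norm_def by (simp add: integral_nonneg)

lemma integral_sq_nonneg: "0 \<le> (\<integral>x. (cmod (f x))\<^sup>2 \<partial>M)"
  by (simp add: integral_nonneg)

lemma l2norm_sq: "(l2norm M f)\<^sup>2 = (\<integral>x. (cmod (f x))\<^sup>2 \<partial>M)"
  unfolding l2norm_def using integral_sq_nonneg by simp

lemma L2_zero: "(\<lambda>x. 0) \<in> L2 M" "l2norm M (\<lambda>x. 0) = 0"
  unfolding L2_def l2norm_def by auto

lemma L2_cs:
  assumes f: "f \<in> L2 M" and g: "g \<in> L2 M"
  shows "integrable M (\<lambda>x. cmod (f x) * cmod (g x))"
    and "(\<integral>x. cmod (f x) * cmod (g x) \<partial>M) \<le> l2norm M f * l2norm M g"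
proof -
  have fm[measurable]: "f \<in> borel_measurable M" and fi: "integrable M (\<lambda>x. (cmod (f x))\<^sup>2)"
    using f by (auto simp: L2_def)
  have gm[measurable]: "g \<in> borel_measurable M" and gi: "integrable M (\<lambda>x. (cmod (g x))\<^sup>2)"
    using g by (auto simp: L2_def)
  have pt: "cmod (f x) * cmod (g x) \<le> (t * (cmod (f x))\<^sup>2 + (cmod (g x))\<^sup>2 / t) / 2" if "t > 0" for t x
  proof -
    have "0 \<le> (t * cmod (f x) - cmod (g x))\<^sup>2 / t" using that by simp
    also have "(t * cmod (f x) - cmod (g x))\<^sup>2 / t = t * (cmod (f x))\<^sup>2 + (cmod (g x))\<^sup>2 / t - 2 * (cmod (f x) * cmod (g x))"
      using that by (simp add: field_simps power2_eq_square)
    finally show ?thesis by simp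
  qed
  show int: "integrable M (\<lambda>x. cmod (f x) * cmod (g x))"
  proof (rule Bochner_Integration.integrable_bound[OF Bochner_Integration.integrable_add[OF fi gi]])
    show "(\<lambda>x. cmod (f x) * cmod (g x)) \<in> borel_measurable M" by measurable
    show "AE x in M. norm (cmod (f x) * cmod (g x)) \<le> norm ((cmod (f x))\<^sup>2 + (cmod (g x))\<^sup>2)"
    proof (intro AE_I2)
      fix x
      have "cmod (f x) * cmod (g x) \<le> ((cmod (f x))\<^sup>2 + (cmod (g x))\<^sup>2) / 2" using pt[of 1 x] by simp
      also have "\<dots> \<le> (cmod (f x))\<^sup>2 + (cmod (g x))\<^sup>2" by simp
      finally show "norm (cmod (f x) * cmod (g x)) \<le> norm ((cmod (f x))\<^sup>2 + (cmod (g x))\<^sup>2)" by simp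
    qed
  qed
  define A where "A = (\<integral>x. (cmod (f x))\<^sup>2 \<partial>M)"
  define B where "B = (\<integral>x. (cmod (g x))\<^sup>2 \<partial>M)"
  define C where "C = (\<integral>x. cmod (f x) * cmod (g x) \<partial>M)"
  have A0: "A \<ge> 0" and B0: "B \<ge> 0" unfolding A_def B_def by (simp_all add: integral_nonneg)
  have key: "C \<le> (t * A + B / t) / 2" if "t > 0" for t
  proof -
    have "C \<le> (\<integral>x. (t * (cmod (f x))\<^sup>2 + (cmod (g x))\<^sup>2 / t) / 2 \<partial>M)"
      unfolding C_def using pt[OF that] fi gi int by (intro integral_mono) auto
    also have "\<dots> = (t * A + B / t) / 2" unfolding A_def B_def using fi gi by simp
    finally show ?thesis .
  qed
  have "C \<le> sqrt A * sqrt B"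
  proof (cases "A > 0 \<and> B > 0")
    case True
    define t where "t = sqrt B / sqrt A"
    have "t > 0" using True t_def by simp
    have sA: "sqrt A > 0" and sB: "sqrt B > 0" using True by auto
    have eA: "A = sqrt A * sqrt A" and eB: "B = sqrt B * sqrt B" using A0 B0 by simp_all
    have "t * A = sqrt A * sqrt B" unfolding t_def using sA by (subst eA) (simp add: field_simps)
    moreover have "B / t = sqrt A * sqrt B" unfolding t_def using sA sB by (subst eB) (simp add: field_simps)
    ultimately show ?thesis using key[OF \<open>t>0\<close>] by simp
  next
    case False
    then have AB: "A = 0 \<or> B = 0" using A0 B0 by linarith
    have "C \<le> 0"
    proof (rule ccontr)
      assume "\<not> C \<le> 0" then have Cp: "C > 0" by simp
      show False
      proof (cases "A = 0")
        case True
        have "C \<le> (((B+1)/C) * A + B / ((B+1)/C)) / 2" using key[of "(B+1)/C"] Cp B0 by simp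
        also have "\<dots> = B * C / (2 * (B + 1))" using True B0 Cp by (simp add: field_simps)
        also have "\<dots> < C"
        proof -
          have e: "C * (2 * (B + 1)) = 2 * (B * C) + 2 * C" by (simp add: algebra_simps)
          have "0 \<le> B * C" using Cp B0 by simp
          then have "B * C < C * (2 * (B + 1))" using e Cp by linarith
          moreover have "0 < 2 * (B + 1)" using B0 by simp
          ultimately show ?thesis by (simp add: pos_divide_less_eq)
        qed
        finally show False by simp
      next
        case False
        then have "B = 0" using AB by simp
        have "C \<le> ((C/(A+1)) * A + B / (C/(A+1))) / 2" using key[of "C/(A+1)"] Cp A0 by simp
        also have "\<dots> = C * A / (2 * (A + 1))" using \<open>B = 0\<close> A0 Cp by (simp add: field_simps)
        also have "\<dots> < C"
        proof -
          have e: "C * (2 * (A + 1)) = 2 * (C * A) + 2 * C" by (simp add: algebra_simps)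
          have "0 \<le> C * A" using Cp A0 by simp
          then have "C * A < C * (2 * (A + 1))" using e Cp by linarith
          moreover have "0 < 2 * (A + 1)" using A0 by simp
          ultimately show ?thesis by (simp add: pos_divide_less_eq)
        qed
        finally show False by simp
      qed
    qed
    moreover have "0 \<le> sqrt A * sqrt B" using A0 B0 by simp
    ultimately show ?thesis by linarith
  qed
  then show "(\<integral>x. cmod (f x) * cmod (g x) \<partial>M) \<le> l2norm M f * l2norm M g"
    unfolding C_def A_def B_def l2norm_def .
qed

lemma L2_add:
  assumes f: "f \<in> L2 M" and g: "g \<in> L2 M"
  shows "(\<lambda>x. f x + g x) \<in> L2 M" and "l2norm M (\<lambda>x. f x + g x) \<le> l2norm M f + l2norm M g"
proof -
  have fm[measurable]: "f \<in> borel_measurable M" and fi: "integrable M (\<lambda>x. (cmod (f x))\<^sup>2)"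
    using f by (auto simp: L2_def)
  have gm[measurable]: "g \<in> borel_measurable M" and gi: "integrable M (\<lambda>x. (cmod (g x))\<^sup>2)"
    using g by (auto simp: L2_def)
  note ci = L2_cs(1)[OF f g]
  have pt: "(cmod (f x + g x))\<^sup>2 \<le> (cmod (f x))\<^sup>2 + 2 * (cmod (f x) * cmod (g x)) + (cmod (g x))\<^sup>2" for x
  proof -
    have "cmod (f x + g x) \<le> cmod (f x) + cmod (g x)" by (rule norm_triangle_ineq)
    then have "(cmod (f x + g x))\<^sup>2 \<le> (cmod (f x) + cmod (g x))\<^sup>2"
      by (rule power_mono[OF _ norm_ge_zero])
    moreover have "(cmod (f x) + cmod (g x))\<^sup>2 = (cmod (f x))\<^sup>2 + 2 * (cmod (f x) * cmod (g x)) + (cmod (g x))\<^sup>2"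
      by (simp add: power2_eq_square algebra_simps)
    ultimately show ?thesis by simp
  qed
  have bi: "integrable M (\<lambda>x. (cmod (f x))\<^sup>2 + 2 * (cmod (f x) * cmod (g x)) + (cmod (g x))\<^sup>2)"
    by (intro Bochner_Integration.integrable_add integrable_mult_right fi gi ci)
  have si: "integrable M (\<lambda>x. (cmod (f x + g x))\<^sup>2)"
  proof (rule Bochner_Integration.integrable_bound[OF bi])
    show "(\<lambda>x. (cmod (f x + g x))\<^sup>2) \<in> borel_measurable M" by measurable
    show "AE x in M. norm ((cmod (f x + g x))\<^sup>2) \<le> norm ((cmod (f x))\<^sup>2 + 2 * (cmod (f x) * cmod (g x)) + (cmod (g x))\<^sup>2)"
      using pt by (auto intro!: AE_I2)
  qed
  show "(\<lambda>x. f x + g x) \<in> L2 M" unfolding L2_def using si by auto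
  have "(\<integral>x. (cmod (f x + g x))\<^sup>2 \<partial>M) \<le> (\<integral>x. (cmod (f x))\<^sup>2 + 2 * (cmod (f x) * cmod (g x)) + (cmod (g x))\<^sup>2 \<partial>M)"
    using si bi pt by (intro integral_mono) auto
  also have "\<dots> = (\<integral>x. (cmod (f x))\<^sup>2 + 2 * (cmod (f x) * cmod (g x)) \<partial>M) + (\<integral>x. (cmod (g x))\<^sup>2 \<partial>M)"
    by (rule Bochner_Integration.integral_add) (intro Bochner_Integration.integrable_add integrable_mult_right fi gi ci)+
  also have "(\<integral>x. (cmod (f x))\<^sup>2 + 2 * (cmod (f x) * cmod (g x)) \<partial>M) = (\<integral>x. (cmod (f x))\<^sup>2 \<partial>M) + (\<integral>x. 2 * (cmod (f x) * cmod (g x)) \<partial>M)"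
    by (rule Bochner_Integration.integral_add) (intro integrable_mult_right fi gi ci)+
  also have "(\<integral>x. 2 * (cmod (f x) * cmod (g x)) \<partial>M) = 2 * (\<integral>x. cmod (f x) * cmod (g x) \<partial>M)"
    by (rule Bochner_Integration.integral_mult_right) (rule ci)
  also have "(\<integral>x. (cmod (f x))\<^sup>2 \<partial>M) + 2 * (\<integral>x. cmod (f x) * cmod (g x) \<partial>M) + (\<integral>x. (cmod (g x))\<^sup>2 \<partial>M)
      = (l2norm M f)\<^sup>2 + 2 * (\<integral>x. cmod (f x) * cmod (g x) \<partial>M) + (l2norm M g)\<^sup>2"
    by (simp only: l2norm_sq)
  also have "\<dots> \<le> (l2norm M f)\<^sup>2 + 2 * (l2norm M f * l2norm M g) + (l2norm M g)\<^sup>2"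
    using L2_cs(2)[OF f g] by simp
  also have "\<dots> = (l2norm M f + l2norm M g)\<^sup>2" by (simp add: power2_eq_square algebra_simps)
  finally have "(l2norm M (\<lambda>x. f x + g x))\<^sup>2 \<le> (l2norm M f + l2norm M g)\<^sup>2"
    by (simp only: l2norm_sq)
  then show "l2norm M (\<lambda>x. f x + g x) \<le> l2norm M f + l2norm M g"
    by (rule power2_le_imp_le[OF _ add_nonneg_nonneg[OF l2norm_nonneg l2norm_nonneg]])
qed

lemma L2_uminus:
  assumes g: "g \<in> L2 M"
  shows "(\<lambda>x. - g x) \<in> L2 M" and "l2norm M (\<lambda>x. - g x) = l2norm M g"
  using g unfolding L2_def l2norm_def by (simp_all add: borel_measurable_uminus)

lemma L2_diff:
  assumes f: "f \<in> L2 M" and g: "g \<in> L2 M"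
  shows "(\<lambda>x. f x - g x) \<in> L2 M" and "l2norm M (\<lambda>x. f x - g x) \<le> l2norm M f + l2norm M g"
  using L2_add[OF f L2_uminus(1)[OF g]] L2_uminus(2)[OF g] by auto

lemma L2_mult_ind:
  assumes A: "A \<in> sets M" and f: "f \<in> L2 M"
  shows "mult_ind A f \<in> L2 M" and "l2norm M (mult_ind A f) \<le> l2norm M f"
proof -
  have fm[measurable]: "f \<in> borel_measurable M" and fi: "integrable M (\<lambda>x. (cmod (f x))\<^sup>2)"
    using f by (auto simp: L2_def)
  have pt: "(cmod (indicator A x * f x))\<^sup>2 \<le> (cmod (f x))\<^sup>2" for x
    by (simp add: indicator_def)
  have mi: "integrable M (\<lambda>x. (cmod (indicator A x * f x))\<^sup>2)"
  proof (rule Bochner_Integration.integrable_bound[OF fi])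
    show "(\<lambda>x. (cmod (indicator A x * f x))\<^sup>2) \<in> borel_measurable M" using A by measurable
    show "AE x in M. norm ((cmod (indicator A x * f x))\<^sup>2) \<le> norm ((cmod (f x))\<^sup>2)"
    proof (intro AE_I2)
      fix x show "norm ((cmod (indicator A x * f x))\<^sup>2) \<le> norm ((cmod (f x))\<^sup>2)" using pt[of x] by simp
    qed
  qed
  have mm: "(\<lambda>x. indicator A x * f x) \<in> borel_measurable M" using A by measurable
  show "mult_ind A f \<in> L2 M" unfolding L2_def mult_ind_def using mi mm by blast
  have "(\<integral>x. (cmod (indicator A x * f x))\<^sup>2 \<partial>M) \<le> (\<integral>x. (cmod (f x))\<^sup>2 \<partial>M)"
    by (intro integral_mono mi fi pt)
  then show "l2norm M (mult_ind A f) \<le> l2norm M f"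
    unfolding l2norm_def mult_ind_def by (rule real_sqrt_le_mono)
qed

lemma opnorm_upper:
  assumes "op_bound M S c" "f \<in> L2 M" "l2norm M f \<le> 1"
  shows "l2norm M (S f) \<le> opnorm M S"
proof -
  have "bdd_above ((\<lambda>f. l2norm M (S f)) ` {f \<in> L2 M. l2norm M f \<le> 1})"
  proof (rule bdd_aboveI2)
    fix h assume h: "h \<in> {f \<in> L2 M. l2norm M f \<le> 1}"
    then have "l2norm M (S h) \<le> c * l2norm M h" using assms(1) unfolding op_bound_def by blast
    also have "\<dots> \<le> \<bar>c\<bar> * 1"
    proof -
      have "c * l2norm M h \<le> \<bar>c\<bar> * l2norm M h" using l2norm_nonneg[of M h] by (simp add: mult_right_mono)
      also have "\<dots> \<le> \<bar>c\<bar> * 1"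
        by (rule mult_left_mono) (use h in simp_all)
      finally show ?thesis .
    qed
    finally show "l2norm M (S h) \<le> \<bar>c\<bar>" by simp
  qed
  then show ?thesis unfolding opnorm_def by (rule cSUP_upper[rotated]) (use assms(2,3) in blast)
qed

lemma opnorm_least:
  assumes "\<And>f. f \<in> L2 M \<Longrightarrow> l2norm M f \<le> 1 \<Longrightarrow> l2norm M (S f) \<le> b"
  shows "opnorm M S \<le> b"
  unfolding opnorm_def
proof (rule cSUP_least)
  show "{f \<in> L2 M. l2norm M f \<le> 1} \<noteq> {}" using L2_zero[of M] by auto
qed (use assms in blast)

lemma opnorm_nonneg:
  assumes "op_bound M S c"
  shows "0 \<le> opnorm M S"
proof -
  have "l2norm M (S (\<lambda>x. 0)) \<le> opnorm M S"
    using opnorm_upper[OF assms L2_zero(1)] L2_zero(2)[of M] by simp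
  then show ?thesis using l2norm_nonneg[of M "S (\<lambda>x. 0)"] by linarith
qed

lemma Op_bounded:
  fixes M :: "'a::metric_space measure" and D :: "'a set" and k :: "'a \<Rightarrow> 'a \<Rightarrow> complex"
  assumes sM: "sets M = sets borel" and D: "countable D" "\<forall>x e. e > 0 \<longrightarrow> (\<exists>d\<in>D. dist x d < e)"
    and sf: "sigma_finite_measure M"
    and kB: "\<forall>x y. cmod (k x y) \<le> B"
    and kc: "continuous_on UNIV (\<lambda>(x,y). k x y)"
    and kr: "\<forall>x y. dist x y > r \<longrightarrow> k x y = 0"
    and balls: "\<forall>x. emeasure M (cball x r) \<le> ennreal S"
    and S0: "0 \<le> S"
  shows "op_bound M (Op M k) (B * S)"
  unfolding op_bound_def
proof (intro ballI conjI)
  interpret sigma_finite_measure M by (rule sf)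
  have B0: "0 \<le> B" using kB norm_ge_zero order_trans by blast
  have spM: "space M = UNIV" using sets_eq_imp_space_eq[OF sM] by simp
  fix f assume f: "f \<in> L2 M"
  have fm[measurable]: "f \<in> borel_measurable M" and fi: "integrable M (\<lambda>x. (cmod (f x))\<^sup>2)"
    using f by (auto simp: L2_def)
  have km[measurable]: "(\<lambda>(x,y). k x y) \<in> borel_measurable (M \<Otimes>\<^sub>M M)"
    by (rule cont_pair_measurable[OF sM D kc])
  define E where "E = {p::'a\<times>'a. dist (fst p) (snd p) \<le> r}"
  have Eset[measurable]: "E \<in> sets (M \<Otimes>\<^sub>M M)"
  proof -
    have "open (- E)" unfolding E_def
      by (simp add: Compl_eq open_Collect_less continuous_on_dist continuous_on_fst continuous_on_snd not_le)
    then have "- E \<in> sets (M \<Otimes>\<^sub>M M)" by (rule open_in_pair_sets[OF sM D])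
    then have "space (M \<Otimes>\<^sub>M M) - (- E) \<in> sets (M \<Otimes>\<^sub>M M)" by (rule sets.compl_sets)
    moreover have "space (M \<Otimes>\<^sub>M M) = UNIV" using spM by (simp add: space_pair_measure)
    ultimately show ?thesis by simp
  qed
  have indE: "indicator (cball x r) y = (indicator E (x, y) :: ennreal)" for x y
    by (simp add: E_def indicator_def mem_cball)
  have indE2: "indicator (cball y r) x = (indicator E (x, y) :: ennreal)" for x y
    by (simp add: E_def indicator_def mem_cball dist_commute)
  have pm: "(\<lambda>p. k (fst p) (snd p) * f (snd p)) \<in> borel_measurable (M \<Otimes>\<^sub>M M)"
  proof -
    have "(\<lambda>p. k (fst p) (snd p)) \<in> borel_measurable (M \<Otimes>\<^sub>M M)"
      using km by (simp add: split_beta')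
    then show ?thesis by measurable
  qed
  have Opm[measurable]: "Op M k f \<in> borel_measurable M"
    unfolding Op_def
    by (rule borel_measurable_lebesgue_integral) (use pm in \<open>simp add: split_beta'\<close>)
  define g where "g y = ennreal (cmod (f y))" for y
  have gm[measurable]: "g \<in> borel_measurable M" unfolding g_def by measurable
  define P where "P x = (\<integral>\<^sup>+ y. indicator (cball x r) y * g y ^ 2 \<partial>M)" for x
  have pw: "ennreal ((cmod (Op M k f x))\<^sup>2) \<le> ennreal (B\<^sup>2) * ennreal S * P x" for x
  proof -
    have cbm: "cball x r \<in> sets M" using sM by simp
    have m1: "(\<lambda>y. indicator (cball x r) y :: ennreal) \<in> borel_measurable M"
      using cbm by simp
    have m2: "(\<lambda>y. indicator (cball x r) y * g y) \<in> borel_measurable M"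
      using m1 gm by (rule borel_measurable_times_ennreal)
    have step1: "ennreal (cmod (Op M k f x)) \<le> ennreal B * (\<integral>\<^sup>+ y. indicator (cball x r) y * g y \<partial>M)"
    proof -
      have "ennreal (cmod (Op M k f x)) \<le> (\<integral>\<^sup>+ y. ennreal (norm (k x y * f y)) \<partial>M)"
      proof (cases "integrable M (\<lambda>y. k x y * f y)")
        case True
        then show ?thesis unfolding Op_def by (rule integral_norm_bound_ennreal)
      next
        case False
        then show ?thesis unfolding Op_def by (simp add: not_integrable_integral_eq)
      qed
      also have "\<dots> \<le> (\<integral>\<^sup>+ y. ennreal B * (indicator (cball x r) y * g y) \<partial>M)"
      proof (rule nn_integral_mono)
        fix y
        show "ennreal (norm (k x y * f y)) \<le> ennreal B * (indicator (cball x r) y * g y)"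
        proof (cases "dist x y \<le> r")
          case True
          have "norm (k x y * f y) \<le> B * cmod (f y)"
            using kB by (simp add: norm_mult mult_right_mono)
          then show ?thesis using True B0 by (simp add: g_def indicator_def ennreal_mult[symmetric])
        next
          case False
          then show ?thesis using kr by simp
        qed
      qed
      also have "\<dots> = ennreal B * (\<integral>\<^sup>+ y. indicator (cball x r) y * g y \<partial>M)"
        by (rule nn_integral_cmult[OF m2])
      finally show ?thesis .
    qed
    have cs: "(\<integral>\<^sup>+ y. indicator (cball x r) y * g y \<partial>M)\<^sup>2 \<le> ennreal S * P x"
    proof -
      have "(\<integral>\<^sup>+ y. indicator (cball x r) y * (indicator (cball x r) y * g y) \<partial>M)\<^sup>2
          \<le> (\<integral>\<^sup>+ y. (indicator (cball x r) y) ^ 2 \<partial>M) * (\<integral>\<^sup>+ y. (indicator (cball x r) y * g y) ^ 2 \<partial>M)"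
        by (rule Cauchy_Schwarz_nn_integral[OF m1 m2])
      moreover have e1: "(\<lambda>y. indicator (cball x r) y * (indicator (cball x r) y * g y)) = (\<lambda>y. indicator (cball x r) y * g y :: ennreal)"
        by (simp add: indicator_def fun_eq_iff)
      moreover have e2: "(\<lambda>y. (indicator (cball x r) y) ^ 2) = (\<lambda>y. indicator (cball x r) y :: ennreal)"
        by (simp add: indicator_def fun_eq_iff)
      moreover have e3: "(\<lambda>y. (indicator (cball x r) y * g y) ^ 2) = (\<lambda>y. indicator (cball x r) y * g y ^ 2 :: ennreal)"
        by (simp add: indicator_def fun_eq_iff)
      ultimately have cs0: "(\<integral>\<^sup>+ y. indicator (cball x r) y * g y \<partial>M)\<^sup>2 \<le> (\<integral>\<^sup>+ y. indicator (cball x r) y \<partial>M) * P x"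
        unfolding P_def by (simp only:)
      have "(\<integral>\<^sup>+ y. indicator (cball x r) y \<partial>M) \<le> ennreal S"
        using cbm balls by simp
      then have "(\<integral>\<^sup>+ y. indicator (cball x r) y \<partial>M) * P x \<le> ennreal S * P x"
        by (rule mult_right_mono) simp
      with cs0 show ?thesis by (rule order_trans)
    qed
    have "ennreal ((cmod (Op M k f x))\<^sup>2) = (ennreal (cmod (Op M k f x)))\<^sup>2"
      by (simp add: ennreal_power)
    also have "\<dots> \<le> (ennreal B * (\<integral>\<^sup>+ y. indicator (cball x r) y * g y \<partial>M))\<^sup>2"
      by (rule power_mono[OF step1]) simp
    also have "\<dots> = ennreal (B\<^sup>2) * (\<integral>\<^sup>+ y. indicator (cball x r) y * g y \<partial>M)\<^sup>2"
      using B0 by (simp add: power_mult_distrib ennreal_power)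
    also have "\<dots> \<le> ennreal (B\<^sup>2) * (ennreal S * P x)"
      by (rule mult_left_mono[OF cs]) simp
    finally show ?thesis by (simp add: mult.assoc)
  qed
  have Pm: "P \<in> borel_measurable M"
  proof -
    have "(\<lambda>(x,y). indicator (cball x r) y * g y ^ 2) \<in> borel_measurable (M \<Otimes>\<^sub>M M)"
    proof -
      have "(\<lambda>p. indicator E p * g (snd p) ^ 2) \<in> borel_measurable (M \<Otimes>\<^sub>M M)" by measurable
      then show ?thesis by (simp add: split_beta' indE)
    qed
    then show ?thesis unfolding P_def by (rule borel_measurable_nn_integral)
  qed
  have fub: "(\<integral>\<^sup>+ x. P x \<partial>M) \<le> ennreal S * (\<integral>\<^sup>+ y. g y ^ 2 \<partial>M)"
  proof -
    have jm: "case_prod (\<lambda>x y. indicator E (x, y) * g y ^ 2) \<in> borel_measurable (M \<Otimes>\<^sub>M M)"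
    proof -
      have "(\<lambda>p. indicator E p * g (snd p) ^ 2) \<in> borel_measurable (M \<Otimes>\<^sub>M M)" by measurable
      then show ?thesis by (simp add: split_beta')
    qed
    have "(\<integral>\<^sup>+ x. P x \<partial>M) = (\<integral>\<^sup>+ x. (\<integral>\<^sup>+ y. indicator E (x, y) * g y ^ 2 \<partial>M) \<partial>M)"
      unfolding P_def by (simp add: indE)
    also have "\<dots> = (\<integral>\<^sup>+ y. (\<integral>\<^sup>+ x. indicator E (x, y) * g y ^ 2 \<partial>M) \<partial>M)"
    proof -
      interpret pair_sigma_finite M M by (simp add: pair_sigma_finite_def sf)
      show ?thesis by (rule Fubini'[OF jm, symmetric])
    qed
    also have "\<dots> = (\<integral>\<^sup>+ y. g y ^ 2 * emeasure M (cball y r) \<partial>M)"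
    proof (rule nn_integral_cong)
      fix y
      have "(\<integral>\<^sup>+ x. indicator E (x, y) * g y ^ 2 \<partial>M) = (\<integral>\<^sup>+ x. g y ^ 2 * indicator (cball y r) x \<partial>M)"
        by (simp add: indE2 mult.commute)
      also have "\<dots> = g y ^ 2 * emeasure M (cball y r)"
        by (rule nn_integral_cmult_indicator) (use sM in simp)
      finally show "(\<integral>\<^sup>+ x. indicator E (x, y) * g y ^ 2 \<partial>M) = g y ^ 2 * emeasure M (cball y r)" .
    qed
    also have "\<dots> \<le> (\<integral>\<^sup>+ y. ennreal S * g y ^ 2 \<partial>M)"
    proof (rule nn_integral_mono)
      fix y
      have "emeasure M (cball y r) * g y ^ 2 \<le> ennreal S * g y ^ 2"
        by (rule mult_right_mono[OF balls[rule_format, of y]]) simp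
      then show "g y ^ 2 * emeasure M (cball y r) \<le> ennreal S * g y ^ 2" by (simp add: mult.commute)
    qed
    also have "\<dots> = ennreal S * (\<integral>\<^sup>+ y. g y ^ 2 \<partial>M)"
      by (rule nn_integral_cmult) measurable
    finally show ?thesis .
  qed
  have gint: "(\<integral>\<^sup>+ y. g y ^ 2 \<partial>M) = ennreal (\<integral>y. (cmod (f y))\<^sup>2 \<partial>M)"
  proof -
    have "(\<integral>\<^sup>+ y. g y ^ 2 \<partial>M) = (\<integral>\<^sup>+ y. ennreal ((cmod (f y))\<^sup>2) \<partial>M)"
      unfolding g_def by (simp add: ennreal_power)
    also have "\<dots> = ennreal (\<integral>y. (cmod (f y))\<^sup>2 \<partial>M)"
      by (rule nn_integral_eq_integral[OF fi]) simp
    finally show ?thesis .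
  qed
  define N where "N = (\<integral>y. (cmod (f y))\<^sup>2 \<partial>M)"
  have N0: "0 \<le> N" unfolding N_def by (simp add: integral_nonneg)
  have tot: "(\<integral>\<^sup>+ x. ennreal ((cmod (Op M k f x))\<^sup>2) \<partial>M) \<le> ennreal (B\<^sup>2 * S * S * N)"
  proof -
    have "(\<integral>\<^sup>+ x. ennreal ((cmod (Op M k f x))\<^sup>2) \<partial>M) \<le> (\<integral>\<^sup>+ x. ennreal (B\<^sup>2) * ennreal S * P x \<partial>M)"
      by (rule nn_integral_mono) (rule pw)
    also have "\<dots> = ennreal (B\<^sup>2) * ennreal S * (\<integral>\<^sup>+ x. P x \<partial>M)"
      by (rule nn_integral_cmult) (rule Pm)
    also have "\<dots> \<le> ennreal (B\<^sup>2) * ennreal S * (ennreal S * ennreal N)"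
      using fub gint unfolding N_def by (simp add: mult_left_mono)
    also have "\<dots> = ennreal (B\<^sup>2 * S * S * N)"
      using S0 N0 by (simp add: ennreal_mult mult.assoc)
    finally show ?thesis .
  qed
  have sqm: "(\<lambda>x. (cmod (Op M k f x))\<^sup>2) \<in> borel_measurable M" by measurable
  have oi: "integrable M (\<lambda>x. (cmod (Op M k f x))\<^sup>2)"
  proof (rule integrableI_bounded[OF sqm])
    have "(\<integral>\<^sup>+ x. ennreal (norm ((cmod (Op M k f x))\<^sup>2)) \<partial>M) = (\<integral>\<^sup>+ x. ennreal ((cmod (Op M k f x))\<^sup>2) \<partial>M)"
      by simp
    also have "\<dots> < \<infinity>" using tot by (simp add: le_less_trans)
    finally show "(\<integral>\<^sup>+ x. ennreal (norm ((cmod (Op M k f x))\<^sup>2)) \<partial>M) < \<infinity>" .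
  qed
  show "Op M k f \<in> L2 M" unfolding L2_def using Opm oi by blast
  have "(\<integral>x. (cmod (Op M k f x))\<^sup>2 \<partial>M) = enn2real (\<integral>\<^sup>+ x. ennreal ((cmod (Op M k f x))\<^sup>2) \<partial>M)"
    by (rule integral_eq_nn_integral[OF sqm]) simp
  also have "\<dots> \<le> enn2real (ennreal (B\<^sup>2 * S * S * N))"
    by (rule enn2real_mono[OF tot]) simp
  also have "\<dots> = (B * S * l2norm M f)\<^sup>2"
  proof -
    have e1: "enn2real (ennreal (B\<^sup>2 * S * S * N)) = B\<^sup>2 * S * S * N" using B0 S0 N0 by simp
    have e2: "(B * S * l2norm M f)\<^sup>2 = B\<^sup>2 * S\<^sup>2 * (l2norm M f)\<^sup>2" by (simp add: power_mult_distrib)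
    have e3: "(l2norm M f)\<^sup>2 = N" by (simp add: l2norm_sq N_def)
    show ?thesis using e1 e2 e3 by (simp add: power2_eq_square)
  qed
  finally have "(l2norm M (Op M k f))\<^sup>2 \<le> (B * S * l2norm M f)\<^sup>2" by (simp only: l2norm_sq)
  then show "l2norm M (Op M k f) \<le> B * S * l2norm M f"
    by (rule power2_le_imp_le) (intro mult_nonneg_nonneg B0 S0 l2norm_nonneg)
qed

lemma inner_nbhd_mem:
  assumes "x \<in> inner_nbhd F r" "dist x y \<le> r"
  shows "y \<in> F"
proof (rule ccontr)
  assume "y \<notin> F"
  then have "(INF z \<in> - F. ereal (dist x z)) \<le> ereal (dist x y)" by (intro INF_lower) simp
  also have "\<dots> \<le> ereal r" using assms(2) by simp
  finally show False using assms(1) unfolding inner_nbhd_def by simp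
qed

lemma inner_nbhd_open:
  fixes F :: "'a::metric_space set"
  shows "open (inner_nbhd F r)"
proof (rule openI)
  fix x assume x: "x \<in> inner_nbhd F r"
  then have lt: "ereal r < (INF y \<in> - F. ereal (dist x y))" unfolding inner_nbhd_def by simp
  obtain s where s: "ereal r < ereal s" "ereal s < (INF y \<in> - F. ereal (dist x y))"
    using ereal_dense2[OF lt] by blast
  have rs: "r < s" using s(1) by simp
  have "ball x (s - r) \<subseteq> inner_nbhd F r"
  proof
    fix x' assume "x' \<in> ball x (s - r)"
    then have d: "dist x x' < s - r" by simp
    have "ereal (s - dist x x') \<le> (INF y \<in> - F. ereal (dist x' y))"
    proof (rule INF_greatest)
      fix y assume y: "y \<in> - F"
      have "ereal s \<le> ereal (dist x y)"
        using s(2) INF_lower[OF y, of "\<lambda>y. ereal (dist x y)"] by (meson order.strict_iff_not order_trans)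
      then have "s \<le> dist x y" by simp
      moreover have "dist x y \<le> dist x x' + dist x' y" by (rule dist_triangle)
      ultimately show "ereal (s - dist x x') \<le> ereal (dist x' y)" by simp
    qed
    moreover have "ereal r < ereal (s - dist x x')" using d by simp
    ultimately show "x' \<in> inner_nbhd F r" unfolding inner_nbhd_def
      using order.strict_trans2 by blast
  qed
  moreover have "s - r > 0" using rs by simp
  ultimately show "\<exists>e>0. ball x e \<subseteq> inner_nbhd F r" by blast
qed

lemma Op_inner:
  assumes kr: "\<forall>x y. dist x y > r \<longrightarrow> k x y = 0" and x: "x \<in> inner_nbhd F r"
  shows "Op M k f x = Op M k (mult_ind F f) x"
  unfolding Op_def mult_ind_def
proof (rule Bochner_Integration.integral_cong[OF refl])
  fix y
  show "k x y * f y = k x y * (indicator F y * f y)"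
  proof (cases "dist x y \<le> r")
    case True
    then have "y \<in> F" using inner_nbhd_mem[OF x] by blast
    then show ?thesis by simp
  next
    case False
    then show ?thesis using kr by simp
  qed
qed

lemma Op_outer:
  assumes kr: "\<forall>x y. dist x y > r \<longrightarrow> k x y = 0" and x: "x \<notin> F"
  shows "Op M k (mult_ind (inner_nbhd F r) f) x = 0"
proof -
  have "Op M k (mult_ind (inner_nbhd F r) f) x = (\<integral>y. 0 \<partial>M)"
    unfolding Op_def mult_ind_def
  proof (rule Bochner_Integration.integral_cong[OF refl])
    fix y
    show "k x y * (indicator (inner_nbhd F r) y * f y) = 0"
    proof (cases "dist x y \<le> r \<and> y \<in> inner_nbhd F r")
      case True
      then have "x \<in> F" using inner_nbhd_mem[of y F r x] by (simp add: dist_commute)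
      then show ?thesis using x by simp
    next
      case False
      then show ?thesis using kr by (auto simp: not_le)
    qed
  qed
  then show ?thesis by simp
qed

lemma INF_le_by_approx:
  fixes a b :: "'i \<Rightarrow> real"
  assumes ne: "I \<noteq> {}" and nn: "\<forall>i\<in>I. 0 \<le> a i"
    and ap: "\<forall>F\<in>I. \<forall>e>0. \<exists>G\<in>I. a G \<le> b F + e"
  shows "(INF i\<in>I. a i) \<le> (INF i\<in>I. b i)"
proof (rule cINF_greatest[OF ne])
  fix F assume F: "F \<in> I"
  show "(INF i\<in>I. a i) \<le> b F"
  proof (rule field_le_epsilon)
    fix e :: real assume "0 < e"
    then obtain G where G: "G \<in> I" "a G \<le> b F + e" using ap F by blast
    have bb: "bdd_below (a ` I)" using nn by (intro bdd_belowI2[of _ 0]) blast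
    have "(INF i\<in>I. a i) \<le> a G" by (rule cINF_lower[OF bb G(1)])
    then show "(INF i\<in>I. a i) \<le> b F + e" using G(2) by linarith
  qed
qed

theorem lemma5p1:
  fixes M :: "'a::metric_space measure"
    and T :: "('a \<Rightarrow> complex) \<Rightarrow> ('a \<Rightarrow> complex)"
    and \<xi> :: "'a set set"
  assumes proper: "\<forall>(x::'a) r. compact (cball x r)"
    and noncompact: "\<not> compact (UNIV :: 'a set)"
    and radon: "radon_measure M"
    and support: "full_support M"
    and balls_pos: "\<forall>x r. r > 0 \<longrightarrow> emeasure M (cball x r) > 0"
    and balls_unif: "\<forall>r>0. (SUP x. emeasure M (cball x r)) < \<infinity>"
    and T_in: "T \<in> E_alg M"
    and coarse: "coarse_filter \<xi>"
  shows "(INF F \<in> {F \<in> \<xi>. F \<in> sets M}. opnorm M (\<lambda>f. mult_ind F (T f)))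
       = (INF F \<in> {F \<in> \<xi>. F \<in> sets M}. opnorm M (\<lambda>f. T (mult_ind F f)))"
proof -
  have sM: "sets M = sets borel" and fin: "\<forall>K. compact K \<longrightarrow> emeasure M K < \<infinity>"
    using radon unfolding radon_measure_def by auto
  obtain D :: "'a set" where D: "countable D" "\<forall>x e. e > 0 \<longrightarrow> (\<exists>d\<in>D. dist x d < e)"
    using ex_countable_dense[OF proper] by blast
  have sf: "sigma_finite_measure M" by (rule sigma_finite_proper[OF sM proper fin])
  have approx: "\<exists>k r C. r > 0 \<and> (\<forall>x y. dist x y > r \<longrightarrow> k x y = 0) \<and> op_bound M (Op M k) C \<and> 0 \<le> C
      \<and> op_bound M (\<lambda>f x. T f x - Op M k f x) \<epsilon>" if "\<epsilon> > 0" for \<epsilon>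
  proof -
    obtain k where kg: "good_kernel k" and kT: "op_bound M (\<lambda>f x. T f x - Op M k f x) \<epsilon>"
      using T_in \<open>\<epsilon> > 0\<close> unfolding E_alg_def by blast
    obtain B where kB: "\<forall>x y. cmod (k x y) \<le> B" using kg unfolding good_kernel_def by blast
    have B0: "0 \<le> B" using kB norm_ge_zero order_trans by blast
    have kuc: "uniformly_continuous_on UNIV (\<lambda>(x,y). k x y)" using kg unfolding good_kernel_def by blast
    obtain r0 where kr0: "\<forall>x y. dist x y > r0 \<longrightarrow> k x y = 0"
      using kg unfolding good_kernel_def controlled_kernel_def by blast
    define r where "r = max r0 1"
    have r: "r > 0" "\<forall>x y. dist x y > r \<longrightarrow> k x y = 0" using kr0 unfolding r_def by auto
    define Sp where "Sp = (SUP x. emeasure M (cball x r))"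
    have Sfin: "Sp < \<infinity>" using balls_unif r(1) unfolding Sp_def by blast
    define S where "S = enn2real Sp"
    have SpS: "Sp = ennreal S" unfolding S_def using Sfin by simp
    have balls: "\<forall>x. emeasure M (cball x r) \<le> ennreal S"
    proof
      fix x
      have "emeasure M (cball x r) \<le> Sp" unfolding Sp_def by (rule SUP_upper) simp
      then show "emeasure M (cball x r) \<le> ennreal S" using SpS by simp
    qed
    have S0: "0 \<le> S" unfolding S_def by simp
    have "op_bound M (Op M k) (B * S)"
      by (rule Op_bounded[OF sM D sf kB uniformly_continuous_imp_continuous[OF kuc] r(2) balls S0])
    moreover have "0 \<le> B * S" using B0 S0 by simp
    ultimately show ?thesis using r kT by blast
  qed
  obtain k0 r0 C0 where C0: "op_bound M (Op M k0) C0" "0 \<le> C0"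
    and k0T: "op_bound M (\<lambda>f x. T f x - Op M k0 f x) 1"
    using approx[of 1] by auto
  define CT where "CT = 1 + C0"
  have CT0: "0 \<le> CT" using C0 CT_def by simp
  have Tb: "op_bound M T CT"
    unfolding op_bound_def
  proof (intro ballI conjI)
    fix f assume f: "f \<in> L2 M"
    have h: "(\<lambda>x. T f x - Op M k0 f x) \<in> L2 M" "l2norm M (\<lambda>x. T f x - Op M k0 f x) \<le> 1 * l2norm M f"
      using k0T f unfolding op_bound_def by auto
    have o: "Op M k0 f \<in> L2 M" "l2norm M (Op M k0 f) \<le> C0 * l2norm M f"
      using C0(1) f unfolding op_bound_def by auto
    have eq: "T f = (\<lambda>x. (T f x - Op M k0 f x) + Op M k0 f x)" by simp
    show "T f \<in> L2 M" using L2_add(1)[OF h(1) o(1)] eq by simp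
    have "l2norm M (T f) \<le> l2norm M (\<lambda>x. T f x - Op M k0 f x) + l2norm M (Op M k0 f)"
      using L2_add(2)[OF h(1) o(1)] eq by simp
    also have "\<dots> \<le> CT * l2norm M f" using h(2) o(2) unfolding CT_def by (simp add: distrib_right)
    finally show "l2norm M (T f) \<le> CT * l2norm M f" .
  qed
  define I where "I = {F \<in> \<xi>. F \<in> sets M}"
  have aB: "op_bound M (\<lambda>f. mult_ind F (T f)) CT" if FM: "F \<in> sets M" for F
    unfolding op_bound_def
  proof (intro ballI conjI)
    fix f assume f: "f \<in> L2 M"
    have Tf: "T f \<in> L2 M" "l2norm M (T f) \<le> CT * l2norm M f" using Tb f unfolding op_bound_def by auto
    show "mult_ind F (T f) \<in> L2 M" using L2_mult_ind(1)[OF FM Tf(1)] .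
    show "l2norm M (mult_ind F (T f)) \<le> CT * l2norm M f" using L2_mult_ind(2)[OF FM Tf(1)] Tf(2) by linarith
  qed
  have bB: "op_bound M (\<lambda>f. T (mult_ind F f)) CT" if FM: "F \<in> sets M" for F
    unfolding op_bound_def
  proof (intro ballI conjI)
    fix f assume f: "f \<in> L2 M"
    have f': "mult_ind F f \<in> L2 M" "l2norm M (mult_ind F f) \<le> l2norm M f" using L2_mult_ind[OF FM f] by auto
    have Tf: "T (mult_ind F f) \<in> L2 M" "l2norm M (T (mult_ind F f)) \<le> CT * l2norm M (mult_ind F f)"
      using Tb f'(1) unfolding op_bound_def by auto
    show "T (mult_ind F f) \<in> L2 M" using Tf(1) .
    have "CT * l2norm M (mult_ind F f) \<le> CT * l2norm M f" using f'(2) CT0 by (rule mult_left_mono)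
    then show "l2norm M (T (mult_ind F f)) \<le> CT * l2norm M f" using Tf(2) by linarith
  qed
  have IM: "F \<in> sets M" if "F \<in> I" for F using that unfolding I_def by blast
  have inner_I: "inner_nbhd F r \<in> I" if "F \<in> I" "r > 0" for F r
  proof -
    have "inner_nbhd F r \<in> \<xi>" using coarse that unfolding coarse_filter_def I_def by blast
    moreover have "inner_nbhd F r \<in> sets M" using sM inner_nbhd_open[of F r] by simp
    ultimately show ?thesis unfolding I_def by blast
  qed
  have Ine: "I \<noteq> {}"
  proof -
    obtain F0 where "F0 \<in> \<xi>" using coarse unfolding coarse_filter_def set_filter_def by blast
    then have "inner_nbhd F0 1 \<in> \<xi>" using coarse unfolding coarse_filter_def by auto
    moreover have "inner_nbhd F0 1 \<in> sets M" using sM inner_nbhd_open[of F0 1] by simp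
    ultimately show ?thesis unfolding I_def by blast
  qed
  have dir1: "\<exists>G\<in>I. opnorm M (\<lambda>f. mult_ind G (T f)) \<le> opnorm M (\<lambda>f. T (mult_ind F f)) + e"
    if F: "F \<in> I" and e: "e > 0" for F e
  proof -
    obtain k r C where r: "r > 0" and kr: "\<forall>x y. dist x y > r \<longrightarrow> k x y = 0"
      and kT: "op_bound M (\<lambda>f x. T f x - Op M k f x) (e/2)"
      using approx[of "e/2"] e by auto
    define G where "G = inner_nbhd F r"
    have GI: "G \<in> I" unfolding G_def by (rule inner_I[OF F r])
    have GM: "G \<in> sets M" using IM[OF GI] .
    have FM: "F \<in> sets M" using IM[OF F] .
    have "opnorm M (\<lambda>f. mult_ind G (T f)) \<le> opnorm M (\<lambda>f. T (mult_ind F f)) + e"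
    proof (rule opnorm_least)
      fix f assume f: "f \<in> L2 M" "l2norm M f \<le> 1"
      define f' where "f' = mult_ind F f"
      have f': "f' \<in> L2 M" "l2norm M f' \<le> 1" using L2_mult_ind[OF FM f(1)] f(2) unfolding f'_def by auto
      define h1 where "h1 = (\<lambda>x. T f x - Op M k f x)"
      define h2 where "h2 = (\<lambda>x. T f' x - Op M k f' x)"
      have h1: "h1 \<in> L2 M" "l2norm M h1 \<le> e/2 * l2norm M f" using kT f(1) unfolding op_bound_def h1_def by auto
      have h2: "h2 \<in> L2 M" "l2norm M h2 \<le> e/2 * l2norm M f'" using kT f'(1) unfolding op_bound_def h2_def by auto
      have "e/2 * l2norm M f \<le> e/2 * 1" by (rule mult_left_mono[OF f(2)]) (use e in simp)
      then have h1b: "l2norm M h1 \<le> e/2" using h1(2) by linarith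
      have "e/2 * l2norm M f' \<le> e/2 * 1" by (rule mult_left_mono[OF f'(2)]) (use e in simp)
      then have h2b: "l2norm M h2 \<le> e/2" using h2(2) by linarith
      have Tf': "T f' \<in> L2 M" using Tb f'(1) unfolding op_bound_def by auto
      have bnd: "l2norm M (T f') \<le> opnorm M (\<lambda>f. T (mult_ind F f))"
        unfolding f'_def using opnorm_upper[OF bB[OF FM] f] by simp
      have eq: "mult_ind G (T f) = (\<lambda>x. (mult_ind G h1 x - mult_ind G h2 x) + mult_ind G (T f') x)"
      proof
        fix x
        show "mult_ind G (T f) x = (mult_ind G h1 x - mult_ind G h2 x) + mult_ind G (T f') x"
        proof (cases "x \<in> G")
          case True
          have "Op M k f x = Op M k f' x" unfolding f'_def using Op_inner[OF kr] True G_def by blast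
          then show ?thesis using True unfolding mult_ind_def h1_def h2_def by simp
        next
          case False
          then show ?thesis unfolding mult_ind_def by simp
        qed
      qed
      have i1: "mult_ind G h1 \<in> L2 M" "l2norm M (mult_ind G h1) \<le> l2norm M h1" using L2_mult_ind[OF GM h1(1)] by auto
      have i2: "mult_ind G h2 \<in> L2 M" "l2norm M (mult_ind G h2) \<le> l2norm M h2" using L2_mult_ind[OF GM h2(1)] by auto
      have i3: "mult_ind G (T f') \<in> L2 M" "l2norm M (mult_ind G (T f')) \<le> l2norm M (T f')" using L2_mult_ind[OF GM Tf'] by auto
      have d: "(\<lambda>x. mult_ind G h1 x - mult_ind G h2 x) \<in> L2 M"
        "l2norm M (\<lambda>x. mult_ind G h1 x - mult_ind G h2 x) \<le> l2norm M (mult_ind G h1) + l2norm M (mult_ind G h2)"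
        using L2_diff[OF i1(1) i2(1)] by auto
      have "l2norm M (mult_ind G (T f)) \<le> l2norm M (\<lambda>x. mult_ind G h1 x - mult_ind G h2 x) + l2norm M (mult_ind G (T f'))"
        unfolding eq by (rule L2_add(2)[OF d(1) i3(1)])
      then show "l2norm M (mult_ind G (T f)) \<le> opnorm M (\<lambda>f. T (mult_ind F f)) + e"
        using d(2) i1(2) i2(2) i3(2) h1b h2b bnd by linarith
    qed
    then show ?thesis using GI by blast
  qed
  have dir2: "\<exists>G\<in>I. opnorm M (\<lambda>f. T (mult_ind G f)) \<le> opnorm M (\<lambda>f. mult_ind F (T f)) + e"
    if F: "F \<in> I" and e: "e > 0" for F e
  proof -
    obtain k r C where r: "r > 0" and kr: "\<forall>x y. dist x y > r \<longrightarrow> k x y = 0"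
      and kT: "op_bound M (\<lambda>f x. T f x - Op M k f x) (e/2)"
      using approx[of "e/2"] e by auto
    define G where "G = inner_nbhd F r"
    have GI: "G \<in> I" unfolding G_def by (rule inner_I[OF F r])
    have GM: "G \<in> sets M" using IM[OF GI] .
    have FM: "F \<in> sets M" using IM[OF F] .
    have "opnorm M (\<lambda>f. T (mult_ind G f)) \<le> opnorm M (\<lambda>f. mult_ind F (T f)) + e"
    proof (rule opnorm_least)
      fix f assume f: "f \<in> L2 M" "l2norm M f \<le> 1"
      define f' where "f' = mult_ind G f"
      have f': "f' \<in> L2 M" "l2norm M f' \<le> 1" using L2_mult_ind[OF GM f(1)] f(2) unfolding f'_def by auto
      define h where "h = (\<lambda>x. T f' x - Op M k f' x)"
      have h: "h \<in> L2 M" "l2norm M h \<le> e/2 * l2norm M f'" using kT f'(1) unfolding op_bound_def h_def by auto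
      have "e/2 * l2norm M f' \<le> e/2 * 1" by (rule mult_left_mono[OF f'(2)]) (use e in simp)
      then have hb: "l2norm M h \<le> e/2" using h(2) by linarith
      have Tf': "T f' \<in> L2 M" using Tb f'(1) unfolding op_bound_def by auto
      have bnd: "l2norm M (mult_ind F (T f')) \<le> opnorm M (\<lambda>f. mult_ind F (T f))"
        using opnorm_upper[OF aB[OF FM] f'] by simp
      have eq: "T f' = (\<lambda>x. (h x - mult_ind F h x) + mult_ind F (T f') x)"
      proof
        fix x
        show "T f' x = (h x - mult_ind F h x) + mult_ind F (T f') x"
        proof (cases "x \<in> F")
          case True
          then show ?thesis unfolding mult_ind_def by simp
        next
          case False
          have "Op M k f' x = 0" unfolding f'_def G_def by (rule Op_outer[OF kr False])
          then show ?thesis using False unfolding mult_ind_def h_def by simp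
        qed
      qed
      have i1: "mult_ind F h \<in> L2 M" "l2norm M (mult_ind F h) \<le> l2norm M h" using L2_mult_ind[OF FM h(1)] by auto
      have i3: "mult_ind F (T f') \<in> L2 M" using L2_mult_ind[OF FM Tf'] by auto
      have d: "(\<lambda>x. h x - mult_ind F h x) \<in> L2 M"
        "l2norm M (\<lambda>x. h x - mult_ind F h x) \<le> l2norm M h + l2norm M (mult_ind F h)"
        using L2_diff[OF h(1) i1(1)] by auto
      have "l2norm M (T f') \<le> l2norm M (\<lambda>x. h x - mult_ind F h x) + l2norm M (mult_ind F (T f'))"
        by (subst eq) (rule L2_add(2)[OF d(1) i3])
      then show "l2norm M (T (mult_ind G f)) \<le> opnorm M (\<lambda>f. mult_ind F (T f)) + e"
        unfolding f'_def[symmetric] using d(2) i1(2) hb bnd by linarith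
    qed
    then show ?thesis using GI by blast
  qed
  have nna: "\<forall>F\<in>I. 0 \<le> opnorm M (\<lambda>f. mult_ind F (T f))" using opnorm_nonneg[OF aB] IM by blast
  have nnb: "\<forall>F\<in>I. 0 \<le> opnorm M (\<lambda>f. T (mult_ind F f))" using opnorm_nonneg[OF bB] IM by blast
  have le1: "(INF F\<in>I. opnorm M (\<lambda>f. mult_ind F (T f))) \<le> (INF F\<in>I. opnorm M (\<lambda>f. T (mult_ind F f)))"
    by (rule INF_le_by_approx[OF Ine nna]) (use dir1 in blast)
  have le2: "(INF F\<in>I. opnorm M (\<lambda>f. T (mult_ind F f))) \<le> (INF F\<in>I. opnorm M (\<lambda>f. mult_ind F (T f)))"
    by (rule INF_le_by_approx[OF Ine nnb]) (use dir2 in blast)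
  show ?thesis using le1 le2 unfolding I_def by linarith
qed

end
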